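(* Let $0<\varepsilon\le 0.1$, let $\Box$ be a closed axis-parallel square of side length $\varepsilon$ with center $o$, and let $R\subseteq\Box$ be a nonempty circular domain. Then every ray emanating from $o$ intersects the boundary $\partial(R\oplus D)$ in exactly one point; consequently the map $\pi:\partial(R\oplus D)\to\mathbb{S}^1$, $\pi(p)=\overrightarrow{op}/\lVert\overrightarrow{op}\rVert$, is a homeomorphism.
   Context: A circular arc is a connected portion of a circle in $\mathbb{R}^2$ (segments included). A circular domain is a closed subset of $\mathbb{R}^2$ whose boundary consists of finitely many circular arcs intersecting only at their endpoints (finite point sets are also allowed). $D$ is the closed unit disk centered at the origin and $\oplus$ denotes Minkowski sum. *)

theory Defs
  imports "HOL-Analysis.Analysis"
begin

text \<open>The plane R^2 is modelled by the type complex.\<close>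

text \<open>A circular arc together with its set of endpoints: either a (possibly
degenerate) line segment, or a connected portion of a circle of positive
radius, parametrised by an angle interval of length at most 2 pi.\<close>
definition circ_arc :: "complex set \<Rightarrow> complex set \<Rightarrow> bool" where
  "circ_arc A E \<longleftrightarrow>
     (\<exists>a b. A = closed_segment a b \<and> E = {a, b}) \<or>
     (\<exists>c r \<alpha> \<beta>. r > 0 \<and> \<alpha> \<le> \<beta> \<and> \<beta> - \<alpha> \<le> 2 * pi \<and>
        A = (\<lambda>t. c + complex_of_real r * cis t) ` {\<alpha>..\<beta>} \<and>
        E = {c + complex_of_real r * cis \<alpha>, c + complex_of_real r * cis \<beta>})"

definition circular_domain :: "complex set \<Rightarrow> bool" where
  "circular_domain S \<longleftrightarrow> closed S \<and>
     (\<exists>arcs :: (complex set \<times> complex set) list.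
        (\<forall>i < length arcs. circ_arc (fst (arcs ! i)) (snd (arcs ! i))) \<and>
        frontier S = (\<Union>i < length arcs. fst (arcs ! i)) \<and>
        (\<forall>i < length arcs. \<forall>j < length arcs. i \<noteq> j \<longrightarrow>
           fst (arcs ! i) \<inter> fst (arcs ! j) \<subseteq> snd (arcs ! i) \<inter> snd (arcs ! j)))"

definition minkowski_sum :: "complex set \<Rightarrow> complex set \<Rightarrow> complex set" where
  "minkowski_sum A B = {a + b | a b. a \<in> A \<and> b \<in> B}"

definition axis_square :: "complex \<Rightarrow> real \<Rightarrow> complex set" where
  "axis_square ctr eps = {z. \<bar>Re z - Re ctr\<bar> \<le> eps / 2 \<and> \<bar>Im z - Im ctr\<bar> \<le> eps / 2}"

definition ray :: "complex \<Rightarrow> complex \<Rightarrow> complex set" where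
  "ray ctr u = {ctr + complex_of_real t * u | t. t \<ge> 0}"

end

theory Submission
  imports Defs
begin

lemma memS: "z \<in> minkowski_sum R (cball 0 1) \<longleftrightarrow> (\<exists>r\<in>R. dist r z \<le> 1)"
proof
  assume "z \<in> minkowski_sum R (cball 0 1)"
  then obtain a b where "z = a + b" "a \<in> R" "b \<in> cball 0 1" by (auto simp: minkowski_sum_def)
  then show "\<exists>r\<in>R. dist r z \<le> 1" by (intro bexI[of _ a]) (auto simp: dist_norm)
next
  assume "\<exists>r\<in>R. dist r z \<le> 1"
  then obtain r where "r \<in> R" "dist r z \<le> 1" by blast
  then have "z = r + (z - r) \<and> r \<in> R \<and> z - r \<in> cball 0 1"
    by (auto simp: dist_norm norm_minus_commute)
  then show "z \<in> minkowski_sum R (cball 0 1)" unfolding minkowski_sum_def by blast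
qed

lemma dist_convex:
  fixes r a b :: complex and l :: real
  assumes "0 \<le> l" "l \<le> 1"
  shows "dist r ((1 - l) *\<^sub>R a + l *\<^sub>R b) \<le> (1 - l) * dist r a + l * dist r b"
proof -
  have "r - ((1 - l) *\<^sub>R a + l *\<^sub>R b) = (1 - l) *\<^sub>R (r - a) + l *\<^sub>R (r - b)"
    by (simp add: algebra_simps)
  then have "norm (r - ((1 - l) *\<^sub>R a + l *\<^sub>R b)) \<le> norm ((1 - l) *\<^sub>R (r - a)) + norm (l *\<^sub>R (r - b))"
    by (metis norm_triangle_ineq)
  also have "\<dots> = (1 - l) * dist r a + l * dist r b" using assms by (simp add: dist_norm)
  finally show ?thesis by (simp add: dist_norm)
qed

lemma ray_lemma:
  fixes ctr u :: complex and R :: "complex set"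
  assumes cR: "compact R" and ne: "R \<noteq> {}" and cl: "\<forall>r\<in>R. dist r ctr < 1" and u: "u \<noteq> 0"
  defines "S \<equiv> minkowski_sum R (cball 0 1)"
  shows "\<exists>!p. p \<in> ray ctr u \<and> p \<in> frontier S"
proof -
  have cS: "compact S" unfolding S_def minkowski_sum_def
    by (intro compact_sums cR compact_cball)
  then have clS: "closed S" by (rule compact_imp_closed)
  define p where "p t = ctr + complex_of_real t * u" for t
  define T where "T = {t. 0 \<le> t \<and> p t \<in> S}"
  have "T = {0..} \<inter> p -` S" unfolding T_def by auto
  moreover have "continuous_on UNIV p" unfolding p_def by (intro continuous_intros)
  ultimately have "closed T" using clS
    by (metis closed_Int closed_atLeast closed_vimage continuous_on_eq_continuous_within)
  moreover have "bounded T"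
  proof -
    have "\<bar>t\<bar> \<le> 2 / cmod u" if "t \<in> T" for t
    proof -
      from that obtain r where r: "r \<in> R" "dist r (p t) \<le> 1" unfolding T_def S_def memS by auto
      have "\<bar>t\<bar> * cmod u = dist ctr (p t)" by (simp add: p_def dist_norm norm_mult)
      also have "\<dots> \<le> dist ctr r + dist r (p t)" by (rule dist_triangle)
      also have "\<dots> \<le> 2" using r cl[rule_format, OF r(1)] by (simp add: dist_commute)
      finally show ?thesis using u by (simp add: field_simps)
    qed
    then show ?thesis unfolding bounded_iff by (metis real_norm_def)
  qed
  ultimately have "compact T" by (simp add: compact_eq_bounded_closed)
  moreover have "0 \<in> T"
  proof -
    obtain r where "r \<in> R" using ne by auto
    then show ?thesis using cl unfolding T_def S_def memS p_def
      by (auto intro!: bexI[of _ r] less_imp_le)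
  qed
  ultimately obtain m where m: "m \<in> T" "\<forall>y\<in>T. y \<le> m"
    using compact_attains_sup by blast
  have int: "p t \<in> interior S" if "0 \<le> t" "t < m" for t
  proof -
    from m obtain r where r: "r \<in> R" "dist r (p m) \<le> 1" unfolding T_def S_def memS by auto
    define l where "l = t / m"
    have m0: "m > 0" using that by auto
    have l: "0 \<le> l" "l < 1" using that m0 by (auto simp: l_def)
    have "p t = (1 - l) *\<^sub>R ctr + l *\<^sub>R p m"
      using m0 by (simp add: p_def l_def scaleR_conv_of_real algebra_simps)
    then have "dist r (p t) \<le> (1 - l) * dist r ctr + l * dist r (p m)"
      using dist_convex[of l r ctr "p m"] l by simp
    also have "\<dots> < 1"
    proof -
      have "(1 - l) * dist r ctr < (1 - l) * 1" using l cl r by (intro mult_strict_left_mono) auto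
      moreover have "l * dist r (p m) \<le> l * 1" using l r by (intro mult_left_mono) auto
      ultimately show ?thesis by simp
    qed
    finally have "p t \<in> ball r 1" by simp
    moreover have "ball r 1 \<subseteq> S" using r unfolding S_def by (auto simp: memS intro!: bexI[of _ r])
    ultimately show ?thesis by (meson interiorI open_ball)
  qed
  have notint: "p m \<notin> interior S"
  proof
    assume "p m \<in> interior S"
    then obtain e where e: "e > 0" "ball (p m) e \<subseteq> S"
      by (meson open_contains_ball open_interior interior_subset subset_trans)
    define t' where "t' = m + e / (2 * cmod u)"
    have "p t' - p m = complex_of_real (e / (2 * cmod u)) * u"
      by (simp add: p_def t'_def algebra_simps)
    then have "dist (p m) (p t') = cmod (complex_of_real (e / (2 * cmod u)) * u)"
      by (metis dist_commute dist_norm)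
    also have "\<dots> = \<bar>e / (2 * cmod u)\<bar> * cmod u"
      by (simp only: norm_mult norm_of_real)
    also have "\<dots> = e / 2" using u e by simp
    finally have "dist (p m) (p t') = e / 2" .
    then have "p t' \<in> S" using e by auto
    moreover have "0 \<le> t'" using m e u unfolding T_def t'_def by auto
    ultimately have "t' \<in> T" unfolding T_def by auto
    then have "t' \<le> m" using m by auto
    then show False using e u unfolding t'_def by (simp add: field_simps)
  qed
  have fr: "frontier S = S - interior S" using clS by (simp add: frontier_def)
  show ?thesis
  proof (rule ex1I[of _ "p m"])
    show "p m \<in> ray ctr u \<and> p m \<in> frontier S"
      using m notint fr unfolding ray_def T_def p_def by auto
  next
    fix q assume q: "q \<in> ray ctr u \<and> q \<in> frontier S"
    then obtain t where t: "t \<ge> 0" "q = p t" unfolding ray_def p_def by auto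
    with q fr have "t \<in> T" unfolding T_def by auto
    then have "t \<le> m" using m by auto
    moreover have "\<not> t < m" using int[OF t(1)] q fr t by auto
    ultimately show "q = p m" using t by auto
  qed
qed

theorem mainTheorem8:
  fixes eps :: real and ctr :: complex and R :: "complex set"
  assumes "0 < eps" and "eps \<le> 0.1"
    and "R \<subseteq> axis_square ctr eps" and "R \<noteq> {}" and "circular_domain R"
  shows "(\<forall>u. u \<noteq> 0 \<longrightarrow>
            (\<exists>!p. p \<in> ray ctr u \<and> p \<in> frontier (minkowski_sum R (cball 0 1))))
       \<and> (\<exists>g. homeomorphism (frontier (minkowski_sum R (cball 0 1))) (sphere 0 1)
               (\<lambda>p. (p - ctr) / complex_of_real (cmod (p - ctr))) g)"
proof -
  define S where "S = minkowski_sum R (cball 0 1)"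
  have clR: "closed R" using assms(5) unfolding circular_domain_def by auto
  have cl: "\<forall>r\<in>R. dist r ctr < 1"
  proof
    fix r assume "r \<in> R"
    then have "\<bar>Re (r - ctr)\<bar> \<le> eps / 2" "\<bar>Im (r - ctr)\<bar> \<le> eps / 2"
      using assms(3) unfolding axis_square_def by auto
    then have "cmod (r - ctr) \<le> eps" using cmod_le[of "r - ctr"] by linarith
    then show "dist r ctr < 1" using assms(2) by (simp add: dist_norm)
  qed
  have "R \<subseteq> cball ctr 1" using cl by (auto simp: dist_commute less_imp_le)
  then have "bounded R" using bounded_cball bounded_subset by blast
  then have cR: "compact R" using clR by (simp add: compact_eq_bounded_closed)
  have P1: "\<forall>u. u \<noteq> 0 \<longrightarrow> (\<exists>!p. p \<in> ray ctr u \<and> p \<in> frontier S)"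
    using ray_lemma[OF cR assms(4) cl] unfolding S_def by blast
  have cS: "compact S" unfolding S_def minkowski_sum_def
    by (intro compact_sums cR compact_cball)
  have ctrint: "ctr \<in> interior S"
  proof -
    obtain r where r: "r \<in> R" using assms(4) by auto
    then have "ctr \<in> ball r 1" using cl by auto
    moreover have "ball r 1 \<subseteq> S" using r unfolding S_def by (auto simp: memS intro!: bexI[of _ r])
    ultimately show ?thesis by (meson interiorI open_ball)
  qed
  then have ctrnf: "ctr \<notin> frontier S" by (simp add: frontier_def)
  define f where "f p = (p - ctr) / complex_of_real (cmod (p - ctr))" for p
  have fnorm: "cmod (f p) = 1" if "p \<noteq> ctr" for p
    using that by (simp add: f_def norm_divide)
  have fdecomp: "p = ctr + complex_of_real (cmod (p - ctr)) * f p" if "p \<noteq> ctr" for p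
    using that by (simp add: f_def)
  have "\<exists>g. homeomorphism (frontier S) (sphere 0 1) f g"
  proof (rule homeomorphism_compact)
    show "compact (frontier S)" using cS by (rule compact_frontier)
    show "continuous_on (frontier S) f" unfolding f_def using ctrnf
      by (intro continuous_intros) auto
    show "f ` frontier S = sphere 0 1"
    proof
      show "f ` frontier S \<subseteq> sphere 0 1" using ctrnf fnorm by fastforce
    next
      show "sphere 0 1 \<subseteq> f ` frontier S"
      proof
        fix v :: complex assume v: "v \<in> sphere 0 1"
        then have v0: "v \<noteq> 0" by auto
        then obtain p where p: "p \<in> ray ctr v" "p \<in> frontier S" using P1 by blast
        then obtain t where t: "t \<ge> 0" "p = ctr + complex_of_real t * v" unfolding ray_def by auto
        have "p \<noteq> ctr" using p ctrnf by auto
        then have t0: "t > 0" using t by auto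
        have "cmod (p - ctr) = t" using t v by (simp add: norm_mult)
        then have "f p = v" using t t0 by (simp add: f_def)
        then show "v \<in> f ` frontier S" using p by auto
      qed
    qed
    show "inj_on f (frontier S)"
    proof
      fix p q assume p: "p \<in> frontier S" and q: "q \<in> frontier S" and e: "f p = f q"
      have pn: "p \<noteq> ctr" "q \<noteq> ctr" using p q ctrnf by auto
      have "f p \<noteq> 0" using fnorm[OF pn(1)] by auto
      moreover have "p \<in> ray ctr (f p)" unfolding ray_def using fdecomp[OF pn(1)] by force
      moreover have "q \<in> ray ctr (f p)" unfolding ray_def e using fdecomp[OF pn(2)] by force
      ultimately show "p = q" using P1 p q by blast
    qed
  qed
  then show ?thesis using P1 unfolding S_def f_def by blast
qed

end
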